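(* Let $b,\ell,u$ be integers with $\ell\geqslant u\geqslant 0$ and $b\geqslant 10\ell$. There exists a set $\mathfrak{B}$ of integer $2\times3$ matrices which is the disjoint union of two subsets $\mathfrak{B}^0$ and $\mathfrak{B}^1$ with $|\mathfrak{B}^0|=2(\ell-u)$ and $|\mathfrak{B}^1|=2u$, such that $\sigma_r(M)=(0,0)$ and $\sigma_c(M)=(-4,2,2)$ for all $M\in\mathfrak{B}^0$, $\sigma_r(M)=(2,-2)$ and $\sigma_c(M)=(-4,2,2)$ for all $M\in\mathfrak{B}^1$, and the multiset of absolute values of all entries of all matrices in $\mathfrak{B}$ is exactly the set $[b-6\ell+1,b+2\ell]\cup[2b-8\ell+2,2b]_2$ (each element occurring once).
   Context: For integers $a\equiv b\pmod d$ with $d\geqslant1$, $[a,b]_d=\{a+id: 0\leqslant i\leqslant (b-a)/d\}$ if $a\leqslant b$ and $[a,b]_d=\varnothing$ if $a>b$; $[a,b]=[a,b]_1$. For a matrix $M$, $\sigma_r(M)$ is the sequence of its row sums and $\sigma_c(M)$ the sequence of its column sums. *)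

theory Defs
  imports "HOL-Analysis.Analysis" "HOL-Library.Multiset"
begin

text \<open>Integer 2x3 matrices are modelled as int^3^2 (row index of type 2, column index of type 3).\<close>

definition row_sums :: "int^3^2 \<Rightarrow> int^2" where
  "row_sums M = (\<chi> i. \<Sum>j\<in>UNIV. M $ i $ j)"

definition col_sums :: "int^3^2 \<Rightarrow> int^3" where
  "col_sums M = (\<chi> j. \<Sum>i\<in>UNIV. M $ i $ j)"

definition abs_entries :: "int^3^2 \<Rightarrow> int multiset" where
  "abs_entries M = image_mset (\<lambda>(i,j). \<bar>M $ i $ j\<bar>) (mset_set (UNIV :: (2 \<times> 3) set))"

text \<open>Arithmetic progression [a,b]_d = {a + i d : 0 \<le> i \<le> (b-a)/d} (empty if a > b).\<close>
definition step_interval :: "int \<Rightarrow> int \<Rightarrow> int \<Rightarrow> int set" where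
  "step_interval a b d = {a + i * d | i. 0 \<le> i \<and> a + i * d \<le> b}"

end

theory Submission
  imports Defs
begin

definition PF :: "int \<Rightarrow> int \<Rightarrow> int \<Rightarrow> int^3^2" where
  "PF E a c = vector [vector [-E, a, c], vector [E-4, 2-a, 2-c]]"
definition QF :: "int \<Rightarrow> int \<Rightarrow> int \<Rightarrow> int^3^2" where
  "QF E a c = vector [vector [E-4, 2-a, 2-c], vector [-E, a, c]]"

lemma abs_entries_explicit:
  "abs_entries M = {#\<bar>M$1$1\<bar>, \<bar>M$1$2\<bar>, \<bar>M$1$3\<bar>, \<bar>M$2$1\<bar>, \<bar>M$2$2\<bar>, \<bar>M$2$3\<bar>#}"
proof -
  have "(UNIV :: (2 \<times> 3) set) = {(1,1),(1,2),(1,3),(2,1),(2,2),(2,3)}"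
    using UNIV_2 UNIV_3 by auto
  show ?thesis unfolding abs_entries_def \<open>UNIV = _\<close> by simp
qed

lemma PF_sums:
  "row_sums (PF E a c) = vector [-E+a+c, E-a-c]"
  "col_sums (PF E a c) = vector [-4, 2, 2]"
  by (auto simp: vec_eq_iff forall_2 forall_3 sum_2 sum_3 row_sums_def col_sums_def PF_def)

lemma QF_sums:
  "row_sums (QF E a c) = vector [E-a-c, -E+a+c]"
  "col_sums (QF E a c) = vector [-4, 2, 2]"
  by (auto simp: vec_eq_iff forall_2 forall_3 sum_2 sum_3 row_sums_def col_sums_def QF_def)

lemma PF_abs: "E \<ge> 4 \<Longrightarrow> a \<ge> 2 \<Longrightarrow> c \<ge> 2 \<Longrightarrow>
  abs_entries (PF E a c) = {#E, a, c, E-4, a-2, c-2#}"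
  by (simp add: abs_entries_explicit PF_def add_mset_commute)

lemma QF_abs: "E \<ge> 4 \<Longrightarrow> a \<ge> 2 \<Longrightarrow> c \<ge> 2 \<Longrightarrow>
  abs_entries (QF E a c) = {#E, a, c, E-4, a-2, c-2#}"
  by (simp add: abs_entries_explicit QF_def add_mset_commute)

lemma blk4: "mset_set {P+1..P+4::int} = {#P+1,P+2,P+3,P+4#}"
proof -
  have "{P+1..P+4::int} = {P+1,P+2,P+3,P+4}" by auto
  then show ?thesis by simp
qed

lemma ev4: "even R \<Longrightarrow> mset_set {x. R+2 \<le> x \<and> x \<le> R+8 \<and> even (x::int)} = {#R+2,R+4,R+6,R+8#}"
proof -
  assume "even R"
  then have "{x. R+2 \<le> x \<and> x \<le> R+8 \<and> even (x::int)} = {R+2,R+4,R+6,R+8}" by auto presburger+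
  then show ?thesis by simp
qed

lemma fin_ev[simp]: "finite {x::int. a \<le> x \<and> x \<le> c \<and> P x}"
  by (rule finite_subset[of _ "{a..c}"]) auto

definition Uset :: "int \<Rightarrow> int \<Rightarrow> int \<Rightarrow> int set" where
  "Uset b n k = {b-6*n+1..b-6*n+4*k} \<union> {b-6*n+4*n+1..b-6*n+4*n+4*k}
     \<union> {x. 2*b-8*n+2 \<le> x \<and> x \<le> 2*b-8*n+8*k \<and> even x}"

definition mat :: "int \<Rightarrow> int \<Rightarrow> int \<Rightarrow> nat \<Rightarrow> bool \<Rightarrow> int^3^2" where
  "mat b n u m t = (let P = b-6*n+4*int m; Q = b-6*n+4*n+4*int m; R = 2*b-8*n+8*int m in
     if int m < n-u then (if t then PF (R+8) (P+4) (Q+4) else PF (R+6) (P+3) (Q+3))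
     else (if t then QF (R+8) (P+3) (Q+3) else PF (R+6) (P+4) (Q+4)))"

lemma per_m:
  assumes "b \<ge> 10*n" "int m < n"
  shows "abs_entries (mat b n u m True) + abs_entries (mat b n u m False) =
    mset_set ({b-6*n+4*int m+1..b-6*n+4*int m+4} \<union> {b-6*n+4*n+4*int m+1..b-6*n+4*n+4*int m+4}
     \<union> {x. (2*b-8*n+8*int m)+2 \<le> x \<and> x \<le> (2*b-8*n+8*int m)+8 \<and> even x})"
proof -
  define P where "P = b-6*n+4*int m"
  define Q where "Q = b-6*n+4*n+4*int m"
  define R where "R = 2*b-8*n+8*int m"
  have P: "P \<ge> 0" and Q: "Q \<ge> 0" and R: "R \<ge> 0" "even R" using assms by (auto simp: P_def Q_def R_def)
  have d: "{P+1..P+4} \<inter> {Q+1..Q+4} = {}" "({P+1..P+4} \<union> {Q+1..Q+4}) \<inter> {x. R+2 \<le> x \<and> x \<le> R+8 \<and> even x} = {}"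
    using assms by (auto simp: P_def Q_def R_def)
  have rhs: "mset_set ({P+1..P+4} \<union> {Q+1..Q+4} \<union> {x. R+2 \<le> x \<and> x \<le> R+8 \<and> even x})
     = {#P+1,P+2,P+3,P+4#} + {#Q+1,Q+2,Q+3,Q+4#} + {#R+2,R+4,R+6,R+8#}"
  proof -
    have e1: "mset_set ({P+1..P+4} \<union> {Q+1..Q+4} \<union> {x. R+2 \<le> x \<and> x \<le> R+8 \<and> even x})
      = mset_set ({P+1..P+4} \<union> {Q+1..Q+4}) + mset_set {x. R+2 \<le> x \<and> x \<le> R+8 \<and> even x}"
      by (rule mset_set_Union[OF _ _ d(2)]) auto
    have e2: "mset_set ({P+1..P+4} \<union> {Q+1..Q+4}) = mset_set {P+1..P+4} + mset_set {Q+1..Q+4}"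
      by (rule mset_set_Union[OF _ _ d(1)]) auto
    show ?thesis unfolding e1 e2 blk4 ev4[OF R(2)] ..
  qed
  have "abs_entries (mat b n u m True) + abs_entries (mat b n u m False) =
        {#P+1,P+2,P+3,P+4#} + {#Q+1,Q+2,Q+3,Q+4#} + {#R+2,R+4,R+6,R+8#}"
    using P Q R unfolding mat_def P_def[symmetric] Q_def[symmetric] R_def[symmetric] Let_def
    by (simp add: PF_abs QF_abs add_mset_commute add.commute)
  then show ?thesis using rhs by (simp add: P_def Q_def R_def)
qed

lemma ustep: "k \<ge> 0 \<Longrightarrow> k < n \<Longrightarrow> b \<ge> 10*n \<Longrightarrow> Uset b n (k+1) = Uset b n k \<union> ({b-6*n+4*k+1..b-6*n+4*k+4} \<union> {b-6*n+4*n+4*k+1..b-6*n+4*n+4*k+4}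
     \<union> {x. (2*b-8*n+8*k)+2 \<le> x \<and> x \<le> (2*b-8*n+8*k)+8 \<and> even x})"
  unfolding Uset_def by (auto; presburger)

lemma udisj: "k \<ge> 0 \<Longrightarrow> k < n \<Longrightarrow> b \<ge> 10*n \<Longrightarrow> Uset b n k \<inter> ({b-6*n+4*k+1..b-6*n+4*k+4} \<union> {b-6*n+4*n+4*k+1..b-6*n+4*n+4*k+4}
     \<union> {x. (2*b-8*n+8*k)+2 \<le> x \<and> x \<le> (2*b-8*n+8*k)+8 \<and> even x}) = {}"
  unfolding Uset_def by auto

lemma usum: "int k \<le> n \<Longrightarrow> b \<ge> 10*n \<Longrightarrow>
  (\<Sum>m<k. abs_entries (mat b n u m True) + abs_entries (mat b n u m False)) = mset_set (Uset b n (int k))"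
proof (induction k)
  case 0
  have "Uset b n (int 0) = {}" unfolding Uset_def by auto
  then show ?case by simp
next
  case (Suc k)
  have fin: "finite (Uset b n k')" for k' unfolding Uset_def by auto
  have "(\<Sum>m<Suc k. abs_entries (mat b n u m True) + abs_entries (mat b n u m False))
     = mset_set (Uset b n (int k)) + (abs_entries (mat b n u k True) + abs_entries (mat b n u k False))"
    using Suc by simp
  also have "\<dots> = mset_set (Uset b n (int k)) + mset_set ({b-6*n+4*int k+1..b-6*n+4*int k+4} \<union> {b-6*n+4*n+4*int k+1..b-6*n+4*n+4*int k+4}
     \<union> {x. (2*b-8*n+8*int k)+2 \<le> x \<and> x \<le> (2*b-8*n+8*int k)+8 \<and> even x})"
    using per_m[OF Suc.prems(2), of k u] Suc.prems by simp
  also have "\<dots> = mset_set (Uset b n (int k) \<union> ({b-6*n+4*int k+1..b-6*n+4*int k+4} \<union> {b-6*n+4*n+4*int k+1..b-6*n+4*n+4*int k+4}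
     \<union> {x. (2*b-8*n+8*int k)+2 \<le> x \<and> x \<le> (2*b-8*n+8*int k)+8 \<and> even x}))"
    by (rule mset_set_Union[symmetric]) (use Suc.prems udisj[of "int k" n b] fin in auto)
  also have "\<dots> = mset_set (Uset b n (int k + 1))"
    using ustep[of "int k" n b] Suc.prems by simp
  finally show ?case by (simp add: add.commute)
qed

lemma key_mat: "b \<ge> 10*n \<Longrightarrow> int m < n \<Longrightarrow>
  \<bar>mat b n u m t $1$1\<bar> + \<bar>mat b n u m t $2$1\<bar> = 2*(2*b-8*n+8*int m+(if t then 8 else 6)) - 4"
  unfolding mat_def Let_def PF_def QF_def by auto

lemma sums_mat: "b \<ge> 10*n \<Longrightarrow>
  col_sums (mat b n u m t) = vector [-4,2,2] \<and>
  row_sums (mat b n u m t) = (if int m < n-u then vector [0,0] else vector [2,-2])"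
  unfolding mat_def Let_def by (auto simp: PF_sums QF_sums)

lemma step_eq: "step_interval (2*b-8*n+2) (2*b) 2 = {x. 2*b-8*n+2 \<le> x \<and> x \<le> 2*b-8*n+8*n \<and> even x}"
proof (intro set_eqI iffI)
  fix x assume "x \<in> step_interval (2*b-8*n+2) (2*b) 2"
  then show "x \<in> {x. 2*b-8*n+2 \<le> x \<and> x \<le> 2*b-8*n+8*n \<and> even x}"
    unfolding step_interval_def by auto
next
  fix x assume x: "x \<in> {x. 2*b-8*n+2 \<le> x \<and> x \<le> 2*b-8*n+8*n \<and> even x}"
  then obtain j where j: "x = 2*j" by (auto elim: evenE)
  show "x \<in> step_interval (2*b-8*n+2) (2*b) 2"
    unfolding step_interval_def
    by (rule CollectI, rule exI[of _ "j - (b-4*n+1)"]) (use x j in auto)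
qed

theorem lemma2p5:
  fixes b l u :: int
  assumes "l \<ge> u" and "u \<ge> 0" and "b \<ge> 10 * l"
  shows "\<exists>B0 B1 :: (int^3^2) set.
           finite B0 \<and> finite B1 \<and> B0 \<inter> B1 = {} \<and>
           card B0 = nat (2 * (l - u)) \<and> card B1 = nat (2 * u) \<and>
           (\<forall>M\<in>B0. row_sums M = vector [0, 0] \<and> col_sums M = vector [-4, 2, 2]) \<and>
           (\<forall>M\<in>B1. row_sums M = vector [2, -2] \<and> col_sums M = vector [-4, 2, 2]) \<and>
           (\<Sum>M\<in>B0 \<union> B1. abs_entries M) =
             mset_set ({b - 6 * l + 1 .. b + 2 * l} \<union> step_interval (2 * b - 8 * l + 2) (2 * b) 2)"
proof -
  define N where "N = nat l"
  define K where "K = nat (l-u)"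
  define g where "g = (\<lambda>(m,t). mat b l u m t)"
  have KN: "K \<le> N" using assms by (simp add: K_def N_def)
  have inj: "inj_on g ({..<N} \<times> UNIV)"
  proof (rule inj_onI)
    fix x y assume xm: "x \<in> {..<N} \<times> (UNIV::bool set)" and ym: "y \<in> {..<N} \<times> (UNIV::bool set)"
      and e: "g x = g y"
    obtain m t where x: "x = (m,t)" by (cases x)
    obtain m' t' where y: "y = (m',t')" by (cases y)
    have "int m < l" "int m' < l" using xm ym x y by (auto simp: N_def)
    with key_mat[OF assms(3), of m u t] key_mat[OF assms(3), of m' u t'] e x y
    have "8*int m+(if t then 8 else 6) = 8*int m' + (if t' then 8 else 6)" by (simp add: g_def)
    then have "m = m' \<and> t = t'" by (auto split: if_splits) presburger+
    then show "x = y" using x y by simp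
  qed
  define D0 where "D0 = {..<K} \<times> (UNIV::bool set)"
  define D1 where "D1 = {K..<N} \<times> (UNIV::bool set)"
  have DU: "D0 \<union> D1 = {..<N} \<times> UNIV" "D0 \<inter> D1 = {}" using KN by (auto simp: D0_def D1_def)
  have injD0: "inj_on g D0" and injD1: "inj_on g D1"
    using inj DU(1) by (auto intro: inj_on_subset)
  have cards: "card D0 = nat (2*(l-u))" "card D1 = nat (2*u)"
    using assms by (auto simp: D0_def D1_def K_def N_def card_cartesian_product nat_mult_distrib)
  show ?thesis
  proof (intro exI conjI ballI)
    show "finite (g ` D0)" "finite (g ` D1)" by (auto simp: D0_def D1_def)
    show "g ` D0 \<inter> g ` D1 = {}"
      using inj_on_image_Int[OF inj, of D0 D1] DU by auto
    show "card (g ` D0) = nat (2*(l-u))" using card_image[OF injD0] cards by simp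
    show "card (g ` D1) = nat (2*u)" using card_image[OF injD1] cards by simp
  next
    fix M assume "M \<in> g ` D0"
    then obtain m t where "M = mat b l u m t" "int m < l - u" by (auto simp: g_def D0_def K_def)
    then show "row_sums M = vector [0, 0]" "col_sums M = vector [-4, 2, 2]"
      using sums_mat[OF assms(3), of u m t] by auto
  next
    fix M assume "M \<in> g ` D1"
    then obtain m t where "M = mat b l u m t" "\<not> int m < l - u" by (auto simp: g_def D1_def K_def)
    then show "row_sums M = vector [2, -2]" "col_sums M = vector [-4, 2, 2]"
      using sums_mat[OF assms(3), of u m t] by auto
  next
    have "(\<Sum>M\<in>g ` D0 \<union> g ` D1. abs_entries M) = (\<Sum>M\<in>g ` ({..<N} \<times> UNIV). abs_entries M)"
      using DU by (simp add: image_Un[symmetric])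
    also have "\<dots> = (\<Sum>x\<in>{..<N} \<times> UNIV. abs_entries (g x))"
      by (simp add: sum.reindex[OF inj])
    also have "\<dots> = (\<Sum>m<N. \<Sum>t\<in>UNIV. abs_entries (mat b l u m t))"
      unfolding sum.cartesian_product g_def by (simp add: split_def)
    also have "\<dots> = (\<Sum>m<N. abs_entries (mat b l u m True) + abs_entries (mat b l u m False))"
      by (simp add: UNIV_bool add.commute)
    also have "\<dots> = mset_set (Uset b l (int N))"
      using usum[of N l b u] assms by (simp add: N_def)
    also have "Uset b l (int N) = {b - 6 * l + 1 .. b + 2 * l} \<union> step_interval (2 * b - 8 * l + 2) (2 * b) 2"
      unfolding step_eq Uset_def using assms by (auto simp: N_def)
    finally show "(\<Sum>M\<in>g ` D0 \<union> g ` D1. abs_entries M) =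
       mset_set ({b - 6 * l + 1 .. b + 2 * l} \<union> step_interval (2 * b - 8 * l + 2) (2 * b) 2)" .
  qed
qed
end
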